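(* Let $\sigma=(\beta_1,\dots,\beta_M)$ be an arbitrary strategy, $\{\mathcal{I}_N\}$ an arbitrary sequence of instances of the non-binary voting game, and $\Sigma_N$ the symmetric profile in $\mathcal{I}_N$ in which every agent plays $\sigma$. Let $f_{w\mathbf{A}}=\sum_{m=1}^MP_{mw}\beta_m-\mu$, $f_{w\mathbf{R}}=\sum_{m=1}^MP_{mw}(1-\beta_m)-(1-\mu)$ and $f=\min(\min_{w\in\mathcal{H}}f_{w\mathbf{A}},\min_{w\in\mathcal{L}}f_{w\mathbf{R}})$. (i) If $f>0$, there exists a constant $N_0>0$ such that $A(\Sigma_N)\ge1-2\exp(-\tfrac12f^2N)$ for all $N>N_0$. (ii) If $f\le0$, there exist constants $N_0>0$ and $\eta'>0$ such that $A(\Sigma_N)\le1-\eta'$ for all $N>N_0$.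
   Context: Non-binary voting game. $N$ agents each vote for $\mathbf{A}$ or $\mathbf{R}$. World state $W\in\{1,\dots,\mathcal{W}\}$ (unobserved), prior $P_w>0$. Conditional on $W$, each agent independently receives a signal $S_n\in\{1,\dots,M\}$ with $P_{mw}=\Pr[S_n=m\mid W=w]$, satisfying stochastic dominance. Threshold $\mu\in(0,1)$: $\mathbf{A}$ wins iff at least $\mu N$ agents vote $\mathbf{A}$, else $\mathbf{R}$. Agents have utilities with $v_n(w,\mathbf{A})$ strictly increasing and $v_n(w,\mathbf{R})$ strictly decreasing in $w$. Constants $\alpha^{\mathbf{A}}_w$, $\alpha^{\mathbf{R}}_w=1-\alpha^{\mathbf{A}}_w$ independent of $N$: exactly $\lfloor\alpha^{\mathbf{R}}_wN\rfloor$ agents prefer $\mathbf{R}$ in state $w$; $\alpha^{\mathbf{A}}_w\ne\mu$. Informed majority decision in $w$: $\mathbf{A}$ if $\alpha^{\mathbf{A}}_w>\mu$, else $\mathbf{R}$. $\mathcal{L}=\{w:\alpha^{\mathbf{A}}_w<\mu\}$, $\mathcal{H}=\{w:\alpha^{\mathbf{A}}_w>\mu\}$, both nonempty. A sequence of instances: $\mathcal{I}_N$ has $N$ agents, all share $\mu$, $(P_w)$, $(P_{mw})$, $(\alpha^{\mathbf{A}}_w)$. Strategy $(\beta_1,\dots,\beta_M)$: $\beta_m$ = probability of voting $\mathbf{A}$ on signal $m$. $\lambda^{\mathbf{X}}_w(\Sigma)$: ex-ante probability that $\mathbf{X}$ wins in state $w$. Fidelity $A(\Sigma)=\sum_{w\in\mathcal{L}}P_w\lambda^{\mathbf{R}}_w(\Sigma)+\sum_{w\in\mathcal{H}}P_w\lambda^{\mathbf{A}}_w(\Sigma)$.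 *)

theory Defs
  imports "HOL-Probability.Probability"
begin

text \<open>States are 1..W, signals are 1..M. Pw w is the prior of state w,
  P m w = Pr[S = m | W = w], beta m = probability of voting A on signal m.\<close>

definition voteA_prob :: "(nat \<Rightarrow> nat \<Rightarrow> real) \<Rightarrow> nat \<Rightarrow> (nat \<Rightarrow> real) \<Rightarrow> nat \<Rightarrow> real" where
  "voteA_prob P M beta w = (\<Sum>m = 1..M. P m w * beta m)"

text \<open>In the symmetric profile with N agents, conditional on state w the votes are
  i.i.d., so the number of A votes is Binomial(N, voteA_prob).
  lambdaA / lambdaR: probability that A / R wins in state w.\<close>
definition lambdaA :: "(nat \<Rightarrow> nat \<Rightarrow> real) \<Rightarrow> nat \<Rightarrow> (nat \<Rightarrow> real) \<Rightarrow> real \<Rightarrow> nat \<Rightarrow> nat \<Rightarrow> real" where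
  "lambdaA P M beta mu N w =
     measure_pmf.prob (binomial_pmf N (voteA_prob P M beta w)) {k. mu * real N \<le> real k}"

definition lambdaR :: "(nat \<Rightarrow> nat \<Rightarrow> real) \<Rightarrow> nat \<Rightarrow> (nat \<Rightarrow> real) \<Rightarrow> real \<Rightarrow> nat \<Rightarrow> nat \<Rightarrow> real" where
  "lambdaR P M beta mu N w =
     measure_pmf.prob (binomial_pmf N (voteA_prob P M beta w)) {k. real k < mu * real N}"

definition Lset :: "nat \<Rightarrow> (nat \<Rightarrow> real) \<Rightarrow> real \<Rightarrow> nat set" where
  "Lset W alphaA mu = {w \<in> {1..W}. alphaA w < mu}"

definition Hset :: "nat \<Rightarrow> (nat \<Rightarrow> real) \<Rightarrow> real \<Rightarrow> nat set" where
  "Hset W alphaA mu = {w \<in> {1..W}. alphaA w > mu}"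

definition fidelity ::
  "nat \<Rightarrow> (nat \<Rightarrow> real) \<Rightarrow> (nat \<Rightarrow> nat \<Rightarrow> real) \<Rightarrow> nat \<Rightarrow> (nat \<Rightarrow> real) \<Rightarrow> real
     \<Rightarrow> (nat \<Rightarrow> real) \<Rightarrow> nat \<Rightarrow> real" where
  "fidelity W Pw P M beta mu alphaA N =
     (\<Sum>w \<in> Lset W alphaA mu. Pw w * lambdaR P M beta mu N w)
   + (\<Sum>w \<in> Hset W alphaA mu. Pw w * lambdaA P M beta mu N w)"

definition fA :: "(nat \<Rightarrow> nat \<Rightarrow> real) \<Rightarrow> nat \<Rightarrow> (nat \<Rightarrow> real) \<Rightarrow> real \<Rightarrow> nat \<Rightarrow> real" where
  "fA P M beta mu w = (\<Sum>m = 1..M. P m w * beta m) - mu"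

definition fR :: "(nat \<Rightarrow> nat \<Rightarrow> real) \<Rightarrow> nat \<Rightarrow> (nat \<Rightarrow> real) \<Rightarrow> real \<Rightarrow> nat \<Rightarrow> real" where
  "fR P M beta mu w = (\<Sum>m = 1..M. P m w * (1 - beta m)) - (1 - mu)"

definition fmin ::
  "nat \<Rightarrow> (nat \<Rightarrow> nat \<Rightarrow> real) \<Rightarrow> nat \<Rightarrow> (nat \<Rightarrow> real) \<Rightarrow> real \<Rightarrow> (nat \<Rightarrow> real) \<Rightarrow> real" where
  "fmin W P M beta mu alphaA =
     min (Min (fA P M beta mu ` Hset W alphaA mu)) (Min (fR P M beta mu ` Lset W alphaA mu))"

definition stoch_dom :: "nat \<Rightarrow> nat \<Rightarrow> (nat \<Rightarrow> nat \<Rightarrow> real) \<Rightarrow> bool" where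
  "stoch_dom W M P \<longleftrightarrow>
     (\<forall>w w' m. 1 \<le> w \<longrightarrow> w \<le> w' \<longrightarrow> w' \<le> W \<longrightarrow> 1 \<le> m \<longrightarrow> m \<le> M \<longrightarrow>
        (\<Sum>j = m..M. P j w) \<le> (\<Sum>j = m..M. P j w'))"

end

theory Submission
  imports Defs
begin

lemma binom_rec:
  fixes h :: "nat \<Rightarrow> real"
  assumes p: "p \<in> {0..1}"
  shows "measure_pmf.expectation (binomial_pmf (Suc n) p) h =
    p * measure_pmf.expectation (binomial_pmf n p) (\<lambda>k. h (Suc k))
    + (1 - p) * measure_pmf.expectation (binomial_pmf n p) h"
proof -
  have "measure_pmf.expectation (binomial_pmf (Suc n) p) h =
     (\<Sum>b\<in>UNIV. pmf (bernoulli_pmf p) b *\<^sub>R measure_pmf.expectation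
        (binomial_pmf n p \<bind> (\<lambda>k. return_pmf ((if b then 1 else 0) + k))) h)"
    unfolding binomial_pmf_Suc[OF p]
    by (rule pmf_expectation_bind) (use p in \<open>auto intro!: finite_UN_I\<close>)
  also have "\<dots> = p * measure_pmf.expectation (binomial_pmf n p) (\<lambda>k. h (Suc k))
    + (1 - p) * measure_pmf.expectation (binomial_pmf n p) h"
    using p by (simp add: UNIV_bool map_pmf_def[symmetric])
  finally show ?thesis .
qed


lemma binom_moments:
  assumes p: "p \<in> {0..1}"
  defines "q \<equiv> p * (1 - p)"
  shows "measure_pmf.expectation (binomial_pmf n p) (\<lambda>k. real k - n * p) = 0
    \<and> measure_pmf.expectation (binomial_pmf n p) (\<lambda>k. (real k - n * p)^2) = n * q
    \<and> measure_pmf.expectation (binomial_pmf n p) (\<lambda>k. (real k - n * p)^4) = n * q * (1 - 6*q) + 3 * n^2 * q^2"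
proof (induction n)
  case 0
  then show ?case using p by (simp add: binomial_pmf_0)
next
  case (Suc n)
  let ?E = "measure_pmf.expectation (binomial_pmf n p)"
  have I1: "?E (\<lambda>k. real k - n * p) = 0" and I2: "?E (\<lambda>k. (real k - n * p)^2) = n * q"
    and I4: "?E (\<lambda>k. (real k - n * p)^4) = n * q * (1 - 6*q) + 3 * n^2 * q^2"
    using Suc by auto
  have [simp]: "integrable (binomial_pmf n p) (f :: nat \<Rightarrow> real)" for f using p by simp
  have e1: "?E (\<lambda>k. real (Suc k) - real (Suc n) * p) = ?E (\<lambda>k. real k - n * p) + (1 - p)"
    by (simp add: algebra_simps)
  have e1': "?E (\<lambda>k. real k - real (Suc n) * p) = ?E (\<lambda>k. real k - n * p) - p"
    by (simp add: algebra_simps)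
  have e2: "?E (\<lambda>k. (real (Suc k) - real (Suc n) * p)^2) = ?E (\<lambda>k. (real k - n * p)^2) + 2*(1-p)*?E (\<lambda>k. real k - n * p) + (1-p)^2"
  proof -
    have "(\<lambda>k. (real (Suc k) - real (Suc n) * p)^2) = (\<lambda>k. (real k - n * p)^2 + 2*(1-p)*(real k - n * p) + (1-p)^2)"
      by (rule ext) (simp add: power2_eq_square algebra_simps)
    then show ?thesis by simp
  qed
  have e2': "?E (\<lambda>k. (real k - real (Suc n) * p)^2) = ?E (\<lambda>k. (real k - n * p)^2) - 2*p*?E (\<lambda>k. real k - n * p) + p^2"
  proof -
    have "(\<lambda>k. (real k - real (Suc n) * p)^2) = (\<lambda>k. (real k - n * p)^2 - 2*p*(real k - n * p) + p^2)"
      by (rule ext) (simp add: power2_eq_square algebra_simps)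
    then show ?thesis by simp
  qed
  have e4: "p * ?E (\<lambda>k. (real (Suc k) - real (Suc n) * p)^4) + (1-p) * ?E (\<lambda>k. (real k - real (Suc n) * p)^4)
     = ?E (\<lambda>k. (real k - n * p)^4 + 6*q*(real k - n * p)^2 + 4*q*(1-2*p)*(real k - n * p) + q*(1-3*q))"
  proof -
    have "p * ?E (\<lambda>k. (real (Suc k) - real (Suc n) * p)^4) + (1-p) * ?E (\<lambda>k. (real k - real (Suc n) * p)^4)
       = ?E (\<lambda>k. p * (real (Suc k) - real (Suc n) * p)^4 + (1-p) * (real k - real (Suc n) * p)^4)"
      by simp
    also have "(\<lambda>k. p * (real (Suc k) - real (Suc n) * p)^4 + (1-p) * (real k - real (Suc n) * p)^4)
       = (\<lambda>k. (real k - n * p)^4 + 6*q*(real k - n * p)^2 + 4*q*(1-2*p)*(real k - n * p) + q*(1-3*q))"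
      by (rule ext) (simp add: q_def power2_eq_square power4_eq_xxxx algebra_simps)
    finally show ?thesis .
  qed
  have e4'': "?E (\<lambda>k. (real k - n * p)^4 + 6*q*(real k - n * p)^2 + 4*q*(1-2*p)*(real k - n * p) + q*(1-3*q))
     = ?E (\<lambda>k. (real k - n * p)^4) + 6*q*?E (\<lambda>k. (real k - n * p)^2) + 4*q*(1-2*p)*?E (\<lambda>k. real k - n * p) + q*(1-3*q)"
    by simp
  have r1: "measure_pmf.expectation (binomial_pmf (Suc n) p) (\<lambda>k. real k - real (Suc n) * p) = 0"
    unfolding binom_rec[OF p] e1 e1' I1 by (simp add: algebra_simps)
  have r2: "measure_pmf.expectation (binomial_pmf (Suc n) p) (\<lambda>k. (real k - real (Suc n) * p)^2) = real (Suc n) * q"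
    unfolding binom_rec[OF p] e2 e2' I1 I2 by (simp add: q_def power2_eq_square algebra_simps)
  have r4: "measure_pmf.expectation (binomial_pmf (Suc n) p) (\<lambda>k. (real k - real (Suc n) * p)^4)
      = real (Suc n) * q * (1 - 6*q) + 3 * (real (Suc n))^2 * q^2"
  proof -
    have "measure_pmf.expectation (binomial_pmf (Suc n) p) (\<lambda>k. (real k - real (Suc n) * p)^4)
      = n * q * (1 - 6*q) + 3 * n^2 * q^2 + 6*q*(n*q) + 4*q*(1-2*p)*0 + q*(1-3*q)"
      unfolding binom_rec[OF p] e4 e4'' I1 I2 I4 by simp
    also have "\<dots> = real (Suc n) * q * (1 - 6*q) + 3 * (real (Suc n))^2 * q^2"
      by (simp add: power2_eq_square algebra_simps)
    finally show ?thesis .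
  qed
  show ?case using r1 r2 r4 by blast
qed

lemma pw_neg: "(z::real) < 0 \<Longrightarrow> 3*z^2/64 - z^4/432 - z/8 \<le> 1"
proof -
  assume z: "z < 0"
  define u where "u = -z"
  have u: "u > 0" using z u_def by simp
  have "0 \<le> 4*(u^2-12)^2" by simp
  moreover have "0 < 15*u^2 - 216*u + 1152"
  proof -
    have "0 \<le> 15*(u - 36/5)^2" by simp
    then show ?thesis by (simp add: power2_eq_square algebra_simps)
  qed
  ultimately have "0 \<le> 4*u^4 - 81*u^2 - 216*u + 1728"
    by (simp add: power2_eq_square power4_eq_xxxx algebra_simps)
  then show ?thesis using u_def by (simp add: power2_eq_square power4_eq_xxxx algebra_simps)
qed

lemma pw_pos: "(z::real) \<ge> 0 \<Longrightarrow> 3*z^2/64 - z^4/432 - z/8 \<le> 0"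
proof -
  assume z: "z \<ge> 0"
  have "0 \<le> (z-13/5)^2*(4*z+104/5)" using z by simp
  then have "0 \<le> 4*z^3 - 81*z + 216" using z
    by (simp add: power2_eq_square power3_eq_cube algebra_simps)
  then have "0 \<le> z * (4*z^3 - 81*z + 216)" using z by simp
  then show ?thesis by (simp add: power2_eq_square power3_eq_cube power4_eq_xxxx algebra_simps)
qed

lemma pw_ind:
  fixes y sg :: real assumes s: "sg > 0"
  shows "3*y^2/(64* sg^2) - y^4/(432* sg^4) - y/(8* sg) \<le> (if y < 0 then 1 else 0)"
proof -
  define z where "z = y / sg"
  have y: "y = z * sg" using s z_def by simp
  have "3*y^2/(64* sg^2) - y^4/(432* sg^4) - y/(8* sg) = 3*z^2/64 - z^4/432 - z/8"
    using s unfolding y by (simp add: power_mult_distrib field_simps)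
  moreover have "(y < 0) = (z < 0)" using s unfolding y by (simp add: mult_less_0_iff)
  ultimately show ?thesis using pw_neg[of z] pw_pos[of z] by auto
qed

lemma binom_anti:
  assumes p: "0 < p" "p < 1" and v: "1 \<le> real n * (p * (1 - p))"
  shows "measure_pmf.prob (binomial_pmf n p) {k. real k < n * p} \<ge> 1/30"
    and "measure_pmf.prob (binomial_pmf n p) {k. real k > n * p} \<ge> 1/30"
proof -
  have p01: "p \<in> {0..1}" using p by simp
  define q where "q = p * (1 - p)"
  define v where "v = real n * q"
  define s where "s = sqrt v"
  have q0: "q \<ge> 0" using p q_def by simp
  have v1: "v \<ge> 1" using v v_def q_def by simp
  have qpos: "q > 0" using p q_def by simp
  have npos: "n > 0" using v1 v_def by (cases n) auto
  have s0: "s > 0" using v1 s_def by simp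
  have s2: "s^2 = v" using v1 s_def by simp
  have s4: "s^4 = v^2" using s2 by (metis power2_eq_square power4_eq_xxxx power_mult_distrib mult.assoc)
  let ?E = "measure_pmf.expectation (binomial_pmf n p)"
  note M = binom_moments[OF p01, of n, folded q_def]
  have [simp]: "integrable (binomial_pmf n p) (f :: nat \<Rightarrow> real)" for f using p01 by simp
  have E4: "?E (\<lambda>k. (real k - n * p)^4) \<le> v + 3 * v^2"
  proof -
    have "real n * q * (1 - 6 * q) \<le> real n * q"
      using q0 by (simp add: algebra_simps mult_nonneg_nonneg)
    then show ?thesis using M unfolding v_def by (simp add: power_mult_distrib)
  qed
  have key: "?E (\<lambda>k. 3*(c*(real k - n * p))^2/(64* s^2) - (c*(real k - n * p))^4/(432* s^4) - (c*(real k - n * p))/(8* s)) \<ge> 1/30"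
    if c: "c = 1 \<or> c = -1" for c
  proof -
    have cc: "c^2 = 1" "c^4 = 1" using c by auto
    have "?E (\<lambda>k. 3*(c*(real k - n * p))^2/(64* s^2) - (c*(real k - n * p))^4/(432* s^4) - (c*(real k - n * p))/(8* s))
      = 3/(64* s^2) * ?E (\<lambda>k. (real k - n * p)^2) - 1/(432* s^4) * ?E (\<lambda>k. (real k - n * p)^4)
        - c/(8* s) * ?E (\<lambda>k. real k - n * p)"
      by (simp add: power_mult_distrib cc)
    also have "\<dots> = 3/64 - 1/(432* v^2) * ?E (\<lambda>k. (real k - n * p)^4)"
      using M s0 s2 s4 v1 qpos npos unfolding v_def by simp
    also have "\<dots> \<ge> 3/64 - 1/(432* v^2) * (v + 3 * v^2)"
      using E4 v1 by (intro diff_left_mono mult_left_mono) auto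
    finally have A: "3/64 - 1/(432* v^2) * (v + 3 * v^2) \<le> ?E (\<lambda>k. 3*(c*(real k - n * p))^2/(64* s^2) - (c*(real k - n * p))^4/(432* s^4) - (c*(real k - n * p))/(8* s))" .
    have "1/(432* v^2) * (v + 3 * v^2) = 1/(432* v) + 3/432" using v1 by (simp add: field_simps power2_eq_square)
    moreover have "1/(432* v) \<le> 1/432" using v1 by (simp add: field_simps)
    ultimately show ?thesis using A by linarith
  qed
  have P: "measure_pmf.prob (binomial_pmf n p) A = ?E (indicator A)" for A
    by simp
  show "measure_pmf.prob (binomial_pmf n p) {k. real k < n * p} \<ge> 1/30"
  proof -
    have "?E (\<lambda>k. 3*(1*(real k - n * p))^2/(64* s^2) - (1*(real k - n * p))^4/(432* s^4) - (1*(real k - n * p))/(8* s))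
       \<le> ?E (indicator {k. real k < n * p})"
    proof (intro integral_mono)
      fix k
      have "3*(1*(real k - n * p))^2/(64 * s^2) - (1*(real k - n * p))^4/(432 * s^4) - (1*(real k - n * p))/(8 * s)
         \<le> (if real k - n * p < 0 then 1 else 0)" using pw_ind[OF s0, of "real k - n * p"] by simp
      moreover have "(if real k - n * p < 0 then 1 else 0) = (indicator {k. real k < n * p} k :: real)"
        by (simp add: indicator_def)
      ultimately show "3*(1*(real k - n * p))^2/(64 * s^2) - (1*(real k - n * p))^4/(432 * s^4) - (1*(real k - n * p))/(8 * s)
         \<le> indicator {k. real k < n * p} k" by linarith
    qed simp_all
    then show ?thesis using key[of 1] P[of "{k. real k < n * p}"] by linarith
  qed
  show "measure_pmf.prob (binomial_pmf n p) {k. real k > n * p} \<ge> 1/30"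
  proof -
    have "?E (\<lambda>k. 3*((-1)*(real k - n * p))^2/(64* s^2) - ((-1)*(real k - n * p))^4/(432* s^4) - ((-1)*(real k - n * p))/(8* s))
       \<le> ?E (indicator {k. real k > n * p})"
    proof (intro integral_mono)
      fix k
      have "3*((-1)*(real k - n * p))^2/(64 * s^2) - ((-1)*(real k - n * p))^4/(432 * s^4) - ((-1)*(real k - n * p))/(8 * s)
         \<le> (if (-1)*(real k - n * p) < 0 then 1 else 0)" using pw_ind[OF s0, of "(-1)*(real k - n * p)"] by blast
      moreover have "(if (-1)*(real k - n * p) < 0 then 1 else 0) = (indicator {k. real k > n * p} k :: real)"
        by (simp add: indicator_def)
      ultimately show "3*((-1)*(real k - n * p))^2/(64 * s^2) - ((-1)*(real k - n * p))^4/(432 * s^4) - ((-1)*(real k - n * p))/(8 * s)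
         \<le> indicator {k. real k > n * p} k" by linarith
    qed simp_all
    then show ?thesis using key[of "-1"] P[of "{k. real k > n * p}"] by linarith
  qed
qed


lemma lam_compl:
  "lambdaR P M beta mu N w = 1 - lambdaA P M beta mu N w"
proof -
  have eq: "{k. real k < mu * real N} = space (measure_pmf (binomial_pmf N (voteA_prob P M beta w))) - {k. mu * real N \<le> real k}"
    by auto
  show ?thesis unfolding lambdaR_def lambdaA_def eq
    by (rule measure_pmf.prob_compl) simp
qed

lemma fid_upper:
  fixes W :: nat and Pw :: "nat \<Rightarrow> real" and c :: real
  assumes prior_pos: "\<forall>w \<in> {1..W}. Pw w > 0"
    and prior_sum: "(\<Sum>w = 1..W. Pw w) = 1"
    and LH: "Lset W alphaA mu \<union> Hset W alphaA mu = {1..W}"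
    and LHd: "Lset W alphaA mu \<inter> Hset W alphaA mu = {}"
    and w0: "(w0 \<in> Lset W alphaA mu \<and> lambdaR P M beta mu N w0 \<le> 1 - c) \<or>
             (w0 \<in> Hset W alphaA mu \<and> lambdaA P M beta mu N w0 \<le> 1 - c)"
  shows "fidelity W Pw P M beta mu alphaA N \<le> 1 - Pw w0 * c"
proof -
  let ?L = "Lset W alphaA mu" and ?H = "Hset W alphaA mu"
  define h where "h w = Pw w * (if w = w0 then 1 - c else 1)" for w
  have fin: "finite ?L" "finite ?H" using LH by (metis finite_Un finite_atLeastAtMost)+
  have w0in: "w0 \<in> {1..W}" using w0 LH by blast
  have le1: "lambdaR P M beta mu N w \<le> 1" "lambdaA P M beta mu N w \<le> 1" for w
    unfolding lambdaR_def lambdaA_def by simp_all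
  have A: "(\<Sum>w\<in>?L. Pw w * lambdaR P M beta mu N w) \<le> (\<Sum>w\<in>?L. h w)"
  proof (rule sum_mono)
    fix w assume w: "w \<in> ?L"
    then have pw: "Pw w > 0" using prior_pos LH by blast
    show "Pw w * lambdaR P M beta mu N w \<le> h w"
    proof (cases "w = w0")
      case True
      then have "lambdaR P M beta mu N w \<le> 1 - c" using w0 w LHd by blast
      then show ?thesis unfolding h_def using True pw by (simp add: mult_left_mono)
    next
      case False
      then show ?thesis unfolding h_def using pw le1 by (simp add: mult_left_le)
    qed
  qed
  have B: "(\<Sum>w\<in>?H. Pw w * lambdaA P M beta mu N w) \<le> (\<Sum>w\<in>?H. h w)"
  proof (rule sum_mono)
    fix w assume w: "w \<in> ?H"
    then have pw: "Pw w > 0" using prior_pos LH by blast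
    show "Pw w * lambdaA P M beta mu N w \<le> h w"
    proof (cases "w = w0")
      case True
      then have "lambdaA P M beta mu N w \<le> 1 - c" using w0 w LHd by blast
      then show ?thesis unfolding h_def using True pw by (simp add: mult_left_mono)
    next
      case False
      then show ?thesis unfolding h_def using pw le1 by (simp add: mult_left_le)
    qed
  qed
  have "(\<Sum>w\<in>?L. h w) + (\<Sum>w\<in>?H. h w) = (\<Sum>w\<in>{1..W}. h w)"
    using sum.union_disjoint[OF fin LHd, of h] LH by simp
  also have "\<dots> = (\<Sum>w\<in>{1..W}. Pw w - (if w = w0 then Pw w * c else 0))"
    unfolding h_def by (intro sum.cong) (auto simp: algebra_simps)
  also have "\<dots> = 1 - Pw w0 * c"
    using prior_sum w0in by (simp add: sum_subtractf)
  finally show ?thesis using A B unfolding fidelity_def by linarith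
qed

theorem corollary6:
  fixes W M :: nat and Pw :: "nat \<Rightarrow> real" and P :: "nat \<Rightarrow> nat \<Rightarrow> real"
    and beta :: "nat \<Rightarrow> real" and mu :: real and alphaA :: "nat \<Rightarrow> real"
  assumes M_pos: "1 \<le> M"
    and prior_pos: "\<forall>w \<in> {1..W}. Pw w > 0"
    and prior_sum: "(\<Sum>w = 1..W. Pw w) = 1"
    and sig_nonneg: "\<forall>w \<in> {1..W}. \<forall>m \<in> {1..M}. P m w \<ge> 0"
    and sig_sum: "\<forall>w \<in> {1..W}. (\<Sum>m = 1..M. P m w) = 1"
    and sd: "stoch_dom W M P"
    and mu: "0 < mu" "mu < 1"
    and alpha_range: "\<forall>w \<in> {1..W}. 0 \<le> alphaA w \<and> alphaA w \<le> 1"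
    and alpha_mono: "\<forall>w w'. 1 \<le> w \<longrightarrow> w \<le> w' \<longrightarrow> w' \<le> W \<longrightarrow> alphaA w \<le> alphaA w'"
    and alpha_ne_mu: "\<forall>w \<in> {1..W}. alphaA w \<noteq> mu"
    and L_ne: "Lset W alphaA mu \<noteq> {}"
    and H_ne: "Hset W alphaA mu \<noteq> {}"
    and beta_range: "\<forall>m \<in> {1..M}. 0 \<le> beta m \<and> beta m \<le> 1"
  shows "(fmin W P M beta mu alphaA > 0 \<longrightarrow>
            (\<exists>N0 :: real. N0 > 0 \<and> (\<forall>N :: nat. real N > N0 \<longrightarrow>
               fidelity W Pw P M beta mu alphaA N
                 \<ge> 1 - 2 * exp (- (1/2) * (fmin W P M beta mu alphaA)\<^sup>2 * real N))))
       \<and> (fmin W P M beta mu alphaA \<le> 0 \<longrightarrow>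
            (\<exists>N0 :: real. \<exists>eta :: real. N0 > 0 \<and> eta > 0 \<and> (\<forall>N :: nat. real N > N0 \<longrightarrow>
               fidelity W Pw P M beta mu alphaA N \<le> 1 - eta)))"
proof -
  let ?L = "Lset W alphaA mu" and ?H = "Hset W alphaA mu"
  define p where "p w = voteA_prob P M beta w" for w
  define f where "f = fmin W P M beta mu alphaA"
  have p01: "0 \<le> p w \<and> p w \<le> 1" if w: "w \<in> {1..W}" for w
  proof -
    have "0 \<le> p w" unfolding p_def voteA_prob_def
      using sig_nonneg beta_range w by (intro sum_nonneg) simp
    moreover have "p w \<le> (\<Sum>m = 1..M. P m w)" unfolding p_def voteA_prob_def
      using sig_nonneg beta_range w by (intro sum_mono) (simp add: mult_left_le)
    ultimately show ?thesis using sig_sum w by simp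
  qed
  have fA_eq: "fA P M beta mu w = p w - mu" for w
    unfolding fA_def p_def voteA_prob_def by simp
  have fR_eq: "fR P M beta mu w = mu - p w" if w: "w \<in> {1..W}" for w
  proof -
    have "(\<Sum>m = 1..M. P m w * (1 - beta m)) = (\<Sum>m = 1..M. P m w) - p w"
      unfolding p_def voteA_prob_def by (simp add: right_diff_distrib sum_subtractf)
    then show ?thesis unfolding fR_def using sig_sum w by simp
  qed
  have LH: "?L \<union> ?H = {1..W}" using alpha_ne_mu unfolding Lset_def Hset_def by force
  have LHd: "?L \<inter> ?H = {}" unfolding Lset_def Hset_def by auto
  have finL: "finite ?L" and finH: "finite ?H" using LH by (metis finite_Un finite_atLeastAtMost)+
  have Lsub: "?L \<subseteq> {1..W}" and Hsub: "?H \<subseteq> {1..W}" using LH by auto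
  have pL: "0 \<le> Pw w" if "w \<in> ?L" for w using prior_pos Lsub that by (meson less_imp_le subsetD)
  have pH: "0 \<le> Pw w" if "w \<in> ?H" for w using prior_pos Hsub that by (meson less_imp_le subsetD)
  have Pw_sum: "(\<Sum>w\<in>?L. Pw w) + (\<Sum>w\<in>?H. Pw w) = 1"
    using sum.union_disjoint[OF finL finH LHd, of Pw] LH prior_sum by simp
  have f_eq: "f = min (Min (fA P M beta mu ` ?H)) (Min (fR P M beta mu ` ?L))"
    unfolding f_def fmin_def by simp
  have part1: "\<exists>N0 :: real. N0 > 0 \<and> (\<forall>N :: nat. real N > N0 \<longrightarrow>
               fidelity W Pw P M beta mu alphaA N \<ge> 1 - 2 * exp (- (1/2) * f\<^sup>2 * real N))"
    if fpos: "f > 0"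
  proof (intro exI[of _ "1/2"] conjI allI impI)
    fix N :: nat assume "real N > 1/2"
    then have Npos: "N > 0" by simp
    define e where "e = 2 * exp (- (1/2) * f\<^sup>2 * real N)"
    have ee: "exp (real_of_int (- 2 * int N) * f\<^sup>2) \<le> e"
    proof -
      have "exp (real_of_int (- 2 * int N) * f\<^sup>2) \<le> exp (- (1/2) * f\<^sup>2 * real N)"
        using fpos by (simp add: mult_le_cancel_right)
      also have "\<dots> \<le> e" unfolding e_def by simp
      finally show ?thesis .
    qed
    have goodH: "lambdaA P M beta mu N w \<ge> 1 - e" if w: "w \<in> ?H" for w
    proof -
      have "f \<le> fA P M beta mu w" using w finH unfolding f_eq by (simp add: min_le_iff_disj)
      then have pw: "mu \<le> p w - f" using fA_eq by simp
      have bd: "binomial_distribution (p w)" using p01 w Hsub by (simp add: binomial_distribution_def subset_iff)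
      have "lambdaR P M beta mu N w \<le> measure_pmf.prob (binomial_pmf N (p w)) {x. real x / real N \<le> p w - f}"
        unfolding lambdaR_def p_def[symmetric]
      proof (rule measure_pmf.finite_measure_mono)
        have m: "mu * real N \<le> p w * real N - f * real N"
          using pw by (metis left_diff_distrib mult_right_mono of_nat_0_le_iff)
        show "{k. real k < mu * real N} \<subseteq> {x. real x / real N \<le> p w - f}"
          using Npos m by (auto simp: field_simps)
      qed simp
      also have "\<dots> \<le> e" using binomial_distribution.prob_le'[OF bd Npos, of f] fpos ee by simp
      finally show ?thesis using lam_compl[of P M beta mu N w] by simp
    qed
    have goodL: "lambdaR P M beta mu N w \<ge> 1 - e" if w: "w \<in> ?L" for w
    proof -
      have "f \<le> fR P M beta mu w" using w finL unfolding f_eq by (simp add: min_le_iff_disj)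
      then have pw: "p w + f \<le> mu" using fR_eq w Lsub by auto
      have bd: "binomial_distribution (p w)" using p01 w Lsub by (simp add: binomial_distribution_def subset_iff)
      have "lambdaA P M beta mu N w \<le> measure_pmf.prob (binomial_pmf N (p w)) {x. p w + f \<le> real x / real N}"
        unfolding lambdaA_def p_def[symmetric]
      proof (rule measure_pmf.finite_measure_mono)
        have m: "p w * real N + f * real N \<le> mu * real N"
          using pw by (metis distrib_right mult_right_mono of_nat_0_le_iff)
        show "{k. mu * real N \<le> real k} \<subseteq> {x. p w + f \<le> real x / real N}"
          using Npos m by (auto simp: field_simps)
      qed simp
      also have "\<dots> \<le> e" using binomial_distribution.prob_ge'[OF bd Npos, of f] fpos ee by simp
      finally show ?thesis using lam_compl[of P M beta mu N w] by simp
    qed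
    have "(\<Sum>w\<in>?L. Pw w * (1 - e)) \<le> (\<Sum>w\<in>?L. Pw w * lambdaR P M beta mu N w)"
      using goodL pL by (intro sum_mono mult_left_mono) auto
    moreover have "(\<Sum>w\<in>?H. Pw w * (1 - e)) \<le> (\<Sum>w\<in>?H. Pw w * lambdaA P M beta mu N w)"
      using goodH pH by (intro sum_mono mult_left_mono) auto
    moreover have "(\<Sum>w\<in>?L. Pw w * (1 - e)) + (\<Sum>w\<in>?H. Pw w * (1 - e)) = 1 - e"
      using Pw_sum by (simp add: sum_distrib_right[symmetric] distrib_right[symmetric])
    ultimately show "fidelity W Pw P M beta mu alphaA N \<ge> 1 - 2 * exp (- (1/2) * f\<^sup>2 * real N)"
      unfolding fidelity_def e_def by linarith
  qed simp
  have part2: "\<exists>N0 :: real. \<exists>eta :: real. N0 > 0 \<and> eta > 0 \<and> (\<forall>N :: nat. real N > N0 \<longrightarrow>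
               fidelity W Pw P M beta mu alphaA N \<le> 1 - eta)"
    if fneg: "f \<le> 0"
  proof -
    have "\<exists>w0 N0. w0 \<in> {1..W} \<and> N0 > 0 \<and> (\<forall>N :: nat. real N > N0 \<longrightarrow>
       (w0 \<in> ?L \<and> lambdaR P M beta mu N w0 \<le> 1 - 1/30) \<or>
       (w0 \<in> ?H \<and> lambdaA P M beta mu N w0 \<le> 1 - 1/30))"
    proof (cases "Min (fA P M beta mu ` ?H) \<le> 0")
      case True
      have "Min (fA P M beta mu ` ?H) \<in> fA P M beta mu ` ?H" using finH H_ne by (intro Min_in) auto
      then obtain w0 where w0: "w0 \<in> ?H" "fA P M beta mu w0 = Min (fA P M beta mu ` ?H)"
        by (metis imageE)
      have w0W: "w0 \<in> {1..W}" using w0 Hsub by auto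
      have pw: "p w0 \<le> mu" using w0 True fA_eq by simp
      show ?thesis
      proof (cases "p w0 = 0")
        case True
        show ?thesis
        proof (intro exI[of _ w0] exI[of _ "1/2"] conjI allI impI disjI2 w0W w0(1))
          fix N :: nat assume "real N > 1/2"
          then have Npos: "N > 0" by simp
          have "lambdaA P M beta mu N w0 = measure_pmf.prob (binomial_pmf N 0) ({k. mu * real N \<le> real k} \<inter> set_pmf (binomial_pmf N 0))"
            unfolding lambdaA_def p_def[symmetric] True measure_Int_set_pmf ..
          also have "{k. mu * real N \<le> real k} \<inter> set_pmf (binomial_pmf N 0) = {}"
          proof -
            have "mu * real N > 0" using Npos mu by simp
            then show ?thesis by auto
          qed
          also have "measure_pmf.prob (binomial_pmf N 0) {} = 0" by simp
          finally show "lambdaA P M beta mu N w0 \<le> 1 - 1/30" by simp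
        qed simp
      next
        case False
        then have p0: "0 < p w0" "p w0 < 1" using p01[OF w0W] pw mu by auto
        show ?thesis
        proof (intro exI[of _ w0] exI[of _ "1/(p w0 * (1 - p w0))"] conjI allI impI disjI2 w0W w0(1))
          show "1/(p w0 * (1 - p w0)) > 0" using p0 by simp
          fix N :: nat assume N: "real N > 1/(p w0 * (1 - p w0))"
          have v: "1 \<le> real N * (p w0 * (1 - p w0))" using N p0 by (simp add: field_simps)
          have "1/30 \<le> measure_pmf.prob (binomial_pmf N (p w0)) {k. real k < N * p w0}"
            using binom_anti(1)[OF p0 v] .
          also have "\<dots> \<le> lambdaR P M beta mu N w0"
            unfolding lambdaR_def p_def[symmetric]
          proof (rule measure_pmf.finite_measure_mono)
            show "{k. real k < N * p w0} \<subseteq> {k. real k < mu * real N}"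
            proof -
              have "real N * p w0 \<le> mu * real N" using pw by (metis mult.commute mult_right_mono of_nat_0_le_iff)
              then show ?thesis by auto
            qed
          qed simp
          finally show "lambdaA P M beta mu N w0 \<le> 1 - 1/30" using lam_compl[of P M beta mu N w0] by simp
        qed
      qed
    next
      case False
      then have F: "Min (fR P M beta mu ` ?L) \<le> 0" using fneg f_eq by linarith
      have "Min (fR P M beta mu ` ?L) \<in> fR P M beta mu ` ?L" using finL L_ne by (intro Min_in) auto
      then obtain w0 where w0: "w0 \<in> ?L" "fR P M beta mu w0 = Min (fR P M beta mu ` ?L)"
        by (metis imageE)
      have w0W: "w0 \<in> {1..W}" using w0 Lsub by auto
      have pw: "mu \<le> p w0" using w0 F fR_eq[OF w0W] by simp
      show ?thesis
      proof (cases "p w0 = 1")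
        case True
        show ?thesis
        proof (intro exI[of _ w0] exI[of _ "1/2"] conjI allI impI disjI1 w0W w0(1))
          fix N :: nat assume "real N > 1/2"
          then have Npos: "N > 0" by simp
          have "lambdaR P M beta mu N w0 = measure_pmf.prob (binomial_pmf N 1) ({k. real k < mu * real N} \<inter> set_pmf (binomial_pmf N 1))"
            unfolding lambdaR_def p_def[symmetric] True measure_Int_set_pmf ..
          also have "{k. real k < mu * real N} \<inter> set_pmf (binomial_pmf N 1) = {}"
          proof -
            have "mu * real N \<le> real N" using mu by (metis less_imp_le mult_left_le_one_le of_nat_0_le_iff)
            then show ?thesis by auto
          qed
          also have "measure_pmf.prob (binomial_pmf N 1) {} = 0" by simp
          finally show "lambdaR P M beta mu N w0 \<le> 1 - 1/30" by simp
        qed simp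
      next
        case False
        then have p0: "0 < p w0" "p w0 < 1" using p01[OF w0W] pw mu by auto
        show ?thesis
        proof (intro exI[of _ w0] exI[of _ "1/(p w0 * (1 - p w0))"] conjI allI impI disjI1 w0W w0(1))
          show "1/(p w0 * (1 - p w0)) > 0" using p0 by simp
          fix N :: nat assume N: "real N > 1/(p w0 * (1 - p w0))"
          have v: "1 \<le> real N * (p w0 * (1 - p w0))" using N p0 by (simp add: field_simps)
          have "1/30 \<le> measure_pmf.prob (binomial_pmf N (p w0)) {k. real k > N * p w0}"
            using binom_anti(2)[OF p0 v] .
          also have "\<dots> \<le> lambdaA P M beta mu N w0"
            unfolding lambdaA_def p_def[symmetric]
          proof (rule measure_pmf.finite_measure_mono)
            show "{k. real k > N * p w0} \<subseteq> {k. mu * real N \<le> real k}"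
            proof
              fix k assume "k \<in> {k. real k > N * p w0}"
              moreover have "mu * real N \<le> N * p w0" using pw by (metis mult.commute mult_right_mono of_nat_0_le_iff)
              ultimately show "k \<in> {k. mu * real N \<le> real k}" by simp
            qed
          qed simp
          finally show "lambdaR P M beta mu N w0 \<le> 1 - 1/30" using lam_compl[of P M beta mu N w0] by simp
        qed
      qed
    qed
    then obtain w0 N0 where w0: "w0 \<in> {1..W}" "N0 > 0" and
      H: "\<And>N :: nat. real N > N0 \<Longrightarrow>
       (w0 \<in> ?L \<and> lambdaR P M beta mu N w0 \<le> 1 - 1/30) \<or>
       (w0 \<in> ?H \<and> lambdaA P M beta mu N w0 \<le> 1 - 1/30)" by blast
    show ?thesis
    proof (rule exI[of _ N0], rule exI[of _ "Pw w0 * (1/30)"], intro conjI allI impI)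
      show "N0 > 0" by fact
      show "Pw w0 * (1/30) > 0" using prior_pos w0 by simp
      fix N :: nat assume "real N > N0"
      then show "fidelity W Pw P M beta mu alphaA N \<le> 1 - Pw w0 * (1/30)"
        using fid_upper[OF prior_pos prior_sum LH LHd H] by blast
    qed
  qed
  show ?thesis using part1 part2 unfolding f_def by blast
qed

end
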